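(* Let $m,n\in\mathbb N$ and let $K\subseteq\mathbb R^n$ be a convex body. Then $S_{n,m+1}(K)^m\le S_{n,m}(K)^{m+1}$.
   Context: For a convex body $K\subseteq\mathbb R^n$, $D^m(K)=\{(x_1,\dots,x_m)\in(\mathbb R^n)^m: K\cap\bigcap_{i=1}^m(K+x_i)\neq\emptyset\}$ and $S_{n,m}(K)=\operatorname{vol}_{nm}(D^m(K))\operatorname{vol}_n(K)^{-m}$, where $\operatorname{vol}_d$ is Lebesgue measure. *)

theory Defs
  imports "HOL-Analysis.Analysis"
begin

definition convex_body :: "(real ^ 'n) set \<Rightarrow> bool" where
  "convex_body K \<longleftrightarrow> compact K \<and> convex K \<and> interior K \<noteq> {}"

text \<open>Points of (R^n)^m are represented as functions on the index set {..<m}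
  (extensional, value undefined outside), the carrier of the product measure.\<close>
definition diff_body :: "nat \<Rightarrow> (real ^ 'n) set \<Rightarrow> (nat \<Rightarrow> real ^ 'n) set" where
  "diff_body m K = {x \<in> PiE {..<m} (\<lambda>_. UNIV).
      K \<inter> (\<Inter>i\<in>{..<m}. (\<lambda>y. y + x i) ` K) \<noteq> {}}"

definition S_ratio :: "nat \<Rightarrow> (real ^ 'n) set \<Rightarrow> real" where
  "S_ratio m K = measure (PiM {..<m} (\<lambda>_. lborel)) (diff_body m K)
      / (measure lborel K) ^ m"

end

theory Submission
  imports Defs
begin


lemma wamgm:
  fixes a w :: "'i \<Rightarrow> real"
  assumes J: "finite J" "J \<noteq> {}" and w: "\<And>j. j \<in> J \<Longrightarrow> w j > 0" "sum w J = 1"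
    and a: "\<And>j. j \<in> J \<Longrightarrow> a j \<ge> 0"
  shows "(\<Prod>j\<in>J. a j powr w j) \<le> (\<Sum>j\<in>J. w j * a j)"
proof (cases "\<exists>j\<in>J. a j = 0")
  case True
  then have "(\<Prod>j\<in>J. a j powr w j) = 0" using J by (auto intro: prod_zero)
  moreover have "0 \<le> (\<Sum>j\<in>J. w j * a j)" using w a by (intro sum_nonneg mult_nonneg_nonneg) (auto simp: less_imp_le)
  ultimately show ?thesis by simp
next
  case False
  have ap: "\<And>j. j \<in> J \<Longrightarrow> a j > 0" using False a by force
  have "exp (\<Sum>j\<in>J. w j *\<^sub>R ln (a j)) \<le> (\<Sum>j\<in>J. w j * exp (ln (a j)))"
    by (rule convex_on_sum[OF J exp_convex w(2)]) (use w in \<open>auto simp: less_imp_le\<close>)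
  also have "\<dots> = (\<Sum>j\<in>J. w j * a j)" using ap by (auto intro!: sum.cong)
  also have "exp (\<Sum>j\<in>J. w j *\<^sub>R ln (a j)) = (\<Prod>j\<in>J. a j powr w j)"
    using ap J by (simp add: exp_sum powr_def mult.commute, intro prod.cong) (auto dest: ap)
  finally show ?thesis .
qed

definition epow :: "ennreal \<Rightarrow> real \<Rightarrow> ennreal" where
  "epow a w = (if a = top then top else ennreal (enn2real a powr w))"

lemma epow_top[simp]: "epow top w = top" by (simp add: epow_def)
lemma epow_ennreal: "x \<ge> 0 \<Longrightarrow> epow (ennreal x) w = ennreal (x powr w)"
  by (simp add: epow_def)
lemma epow_0[simp]: "epow 0 w = 0" by (simp add: epow_def)
lemma epow_1[simp]: "epow 1 w = 1" by (simp add: epow_def)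
lemma epow_eq_0_iff: "w > 0 \<Longrightarrow> epow a w = 0 \<longleftrightarrow> a = 0"
  unfolding epow_def by (cases a) (auto simp: ennreal_eq_0_iff)
lemma epow_eq_top_iff: "epow a w = top \<longleftrightarrow> a = top"
  by (cases a) (auto simp: epow_def)
lemma epow_one_exp[simp]: "epow a 1 = a"
  by (cases a) (auto simp: epow_def)

lemma epow_epow: "epow (epow a w) v = epow a (w * v)"
  by (cases a) (auto simp: epow_def powr_powr)

lemma epow_fin: "a \<noteq> top \<Longrightarrow> epow a w = ennreal (enn2real a powr w)"
  by (simp add: epow_def)

lemma epow_mult: "epow (a * b) w = epow a w * epow b w"
proof (cases "a = top \<or> b = top")
  case True
  show ?thesis
  proof (cases "a = 0 \<or> b = 0")
    case True
    then show ?thesis by auto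
  next
    case False
    then have "a * b = top" using \<open>a = top \<or> b = top\<close> by (auto simp: ennreal_mult_eq_top_iff)
    moreover have "epow a w \<noteq> 0" "epow b w \<noteq> 0" using False
      by (auto simp: epow_def ennreal_eq_0_iff enn2real_eq_0_iff split: if_splits)
    moreover have "epow a w = top \<or> epow b w = top" using \<open>a = top \<or> b = top\<close> by auto
    ultimately show ?thesis by (auto simp: ennreal_mult_eq_top_iff)
  qed
next
  case False
  then obtain x y where xy: "a = ennreal x" "b = ennreal y" "x \<ge> 0" "y \<ge> 0"
    by (metis enn2real_nonneg ennreal_enn2real_if)
  have "a * b = ennreal (x * y)" using xy by (simp add: ennreal_mult)
  then have "epow (a * b) w = ennreal ((x*y) powr w)" using xy by (simp add: epow_ennreal)
  also have "\<dots> = ennreal (x powr w) * ennreal (y powr w)" using xy by (simp add: powr_mult ennreal_mult)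
  also have "\<dots> = epow a w * epow b w" using xy by (simp add: epow_ennreal)
  finally show ?thesis .
qed

lemma epow_prod: "finite J \<Longrightarrow> epow (\<Prod>j\<in>J. f j) w = (\<Prod>j\<in>J. epow (f j) w)"
  by (induction J rule: finite_induct) (simp_all add: epow_mult)

lemma epow_add: "epow a w * epow a v = epow a (w + v)"
proof (cases "a = top")
  case False
  then obtain r where "a = ennreal r" "r \<ge> 0" by (metis enn2real_nonneg ennreal_enn2real_if)
  then show ?thesis by (simp add: epow_ennreal powr_add ennreal_mult)
qed simp

lemma epow_mono: assumes ab: "a \<le> b" and w: "w \<ge> 0" shows "epow a w \<le> epow b w"
proof (cases "b = top")
  case True then show ?thesis by simp
next
  case False
  have "a \<noteq> top" using False ab by (metis top_unique)
  moreover have "enn2real a \<le> enn2real b" using ab False by (intro enn2real_mono) (auto simp: top.not_eq_extremum)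
  ultimately show ?thesis using False w
    by (simp add: epow_fin powr_mono2)
qed

lemma epow_nat: "n > 0 \<Longrightarrow> epow a (real n) = a ^ n"
  by (cases a) (auto simp: epow_def powr_realpow' ennreal_power)

lemma epow_indicator: "w > 0 \<Longrightarrow> epow (indicator A x) w = indicator A x"
  by (auto simp: indicator_def)

lemma measurable_epow[measurable]:
  "f \<in> borel_measurable M \<Longrightarrow> (\<lambda>x. epow (f x) w) \<in> borel_measurable M"
proof -
  assume f: "f \<in> borel_measurable M"
  have "{x \<in> space M. f x = top} = f -` {top} \<inter> space M" by auto
  also have "\<dots> \<in> sets M" by (rule measurable_sets[OF f]) simp
  finally have S: "{x \<in> space M. f x = top} \<in> sets M" .
  have g: "(\<lambda>x. ennreal (enn2real (f x) powr w)) \<in> borel_measurable M"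
    by (intro measurable_compose[OF _ measurable_ennreal] powr_real_measurable
        borel_measurable_enn2real f borel_measurable_const)
  show ?thesis unfolding epow_def
    by (rule measurable_If[OF measurable_const g S]) simp
qed



lemma wamgm_ennreal:
  fixes a :: "'i \<Rightarrow> ennreal" and w :: "'i \<Rightarrow> real"
  assumes J: "finite J" "J \<noteq> {}" and w: "\<And>j. j \<in> J \<Longrightarrow> w j > 0" "sum w J = 1"
  shows "(\<Prod>j\<in>J. epow (a j) (w j)) \<le> (\<Sum>j\<in>J. ennreal (w j) * a j)"
proof (cases "\<exists>j\<in>J. a j = top")
  case True
  then obtain j where j: "j \<in> J" "a j = top" by auto
  then have "ennreal (w j) * a j = top" using w(1)[OF j(1)] by (simp add: ennreal_mult_top)
  then have "(\<Sum>j\<in>J. ennreal (w j) * a j) = top" using J(1) j(1) ennreal_sum_eq_top by blast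
  then show ?thesis by simp
next
  case False
  define b where "b j = enn2real (a j)" for j
  have ab: "\<And>j. j \<in> J \<Longrightarrow> a j = ennreal (b j)" using False by (auto simp: b_def ennreal_enn2real_if)
  have b0: "\<And>j. b j \<ge> 0" by (simp add: b_def)
  have "(\<Prod>j\<in>J. epow (a j) (w j)) = (\<Prod>j\<in>J. ennreal (b j powr w j))"
    using ab b0 by (intro prod.cong) (auto simp: epow_ennreal)
  also have "\<dots> = ennreal (\<Prod>j\<in>J. b j powr w j)" by (rule prod_ennreal) simp
  also have "\<dots> \<le> ennreal (\<Sum>j\<in>J. w j * b j)"
    by (rule ennreal_leI, rule wamgm[OF J w]) (auto simp: b0)
  also have "\<dots> = (\<Sum>j\<in>J. ennreal (w j * b j))"
    by (subst sum_ennreal) (use w b0 in \<open>force intro: mult_nonneg_nonneg less_imp_le\<close>, simp)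
  also have "\<dots> = (\<Sum>j\<in>J. ennreal (w j) * a j)"
    using ab w b0 by (intro sum.cong) (auto simp: ennreal_mult less_imp_le)
  finally show ?thesis .
qed

lemma holder_nn:
  fixes F :: "'i \<Rightarrow> 'a \<Rightarrow> ennreal" and w :: "'i \<Rightarrow> real"
  assumes J: "finite J" "J \<noteq> {}" and w: "\<And>j. j \<in> J \<Longrightarrow> w j > 0" "sum w J = 1"
    and F: "\<And>j. j \<in> J \<Longrightarrow> F j \<in> borel_measurable M"
  shows "(\<integral>\<^sup>+x. (\<Prod>j\<in>J. epow (F j x) (w j)) \<partial>M) \<le> (\<Prod>j\<in>J. epow (\<integral>\<^sup>+x. F j x \<partial>M) (w j))"
proof (cases "\<exists>j\<in>J. (\<integral>\<^sup>+x. F j x \<partial>M) = 0")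
  case True
  then obtain j where j: "j \<in> J" "(\<integral>\<^sup>+x. F j x \<partial>M) = 0" by auto
  then have "AE x in M. F j x = 0" using F[OF j(1)] by (simp add: nn_integral_0_iff_AE)
  then have "AE x in M. (\<Prod>j\<in>J. epow (F j x) (w j)) = 0"
    by eventually_elim (use j J in \<open>auto intro!: prod_zero bexI[of _ j]\<close>)
  then have "(\<integral>\<^sup>+x. (\<Prod>j\<in>J. epow (F j x) (w j)) \<partial>M) = (\<integral>\<^sup>+x. 0 \<partial>M)"
    by (rule nn_integral_cong_AE)
  then have "(\<integral>\<^sup>+x. (\<Prod>j\<in>J. epow (F j x) (w j)) \<partial>M) = 0" by simp
  then show ?thesis by simp
next
  case False
  note nz = False
  show ?thesis
  proof (cases "\<exists>j\<in>J. (\<integral>\<^sup>+x. F j x \<partial>M) = top")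
    case True
    have "(\<Prod>j\<in>J. epow (\<integral>\<^sup>+x. F j x \<partial>M) (w j)) = top"
      using True nz J w by (subst ennreal_prod_eq_top) (auto simp: epow_eq_0_iff epow_eq_top_iff)
    then show ?thesis by simp
  next
    case False
    define c where "c j = enn2real (\<integral>\<^sup>+x. F j x \<partial>M)" for j
    have cI: "\<And>j. j \<in> J \<Longrightarrow> (\<integral>\<^sup>+x. F j x \<partial>M) = ennreal (c j)"
      using False by (auto simp: c_def ennreal_enn2real_if)
    have cpos: "\<And>j. j \<in> J \<Longrightarrow> c j > 0"
      using nz False by (auto simp: c_def enn2real_eq_0_iff intro!: enn2real_positive_iff[THEN iffD2]
        simp: top.not_eq_extremum zero_less_iff_neq_zero)
    define C where "C = (\<Prod>j\<in>J. epow (\<integral>\<^sup>+x. F j x \<partial>M) (w j))"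
    have C: "C = (\<Prod>j\<in>J. epow (ennreal (c j)) (w j))" unfolding C_def using cI by (intro prod.cong) auto
    have pt: "(\<Prod>j\<in>J. epow (F j x) (w j)) \<le> C * (\<Sum>j\<in>J. ennreal (w j) * (ennreal (1 / c j) * F j x))" for x
    proof -
      have "(\<Prod>j\<in>J. epow (F j x) (w j)) = (\<Prod>j\<in>J. epow (ennreal (c j)) (w j) * epow (ennreal (1 / c j) * F j x) (w j))"
      proof (intro prod.cong refl)
        fix j assume "j \<in> J"
        then have "F j x = ennreal (c j) * (ennreal (1 / c j) * F j x)"
          using cpos[of j] by (simp add: mult.assoc[symmetric] ennreal_mult[symmetric])
        then show "epow (F j x) (w j) = epow (ennreal (c j)) (w j) * epow (ennreal (1 / c j) * F j x) (w j)"
          by (metis epow_mult)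
      qed
      also have "\<dots> = C * (\<Prod>j\<in>J. epow (ennreal (1 / c j) * F j x) (w j))"
        by (simp add: prod.distrib C)
      also have "\<dots> \<le> C * (\<Sum>j\<in>J. ennreal (w j) * (ennreal (1 / c j) * F j x))"
        by (intro mult_left_mono wamgm_ennreal[OF J w]) auto
      finally show ?thesis .
    qed
    have "(\<integral>\<^sup>+x. (\<Prod>j\<in>J. epow (F j x) (w j)) \<partial>M) \<le> (\<integral>\<^sup>+x. C * (\<Sum>j\<in>J. ennreal (w j) * (ennreal (1 / c j) * F j x)) \<partial>M)"
      by (intro nn_integral_mono pt)
    also have "\<dots> = C * (\<Sum>j\<in>J. ennreal (w j) * (ennreal (1 / c j) * (\<integral>\<^sup>+x. F j x \<partial>M)))"
      using F by (simp add: nn_integral_cmult nn_integral_sum)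
    also have "\<dots> = C * (\<Sum>j\<in>J. ennreal (w j))"
    proof (intro arg_cong2[where f="(*)"] sum.cong refl)
      fix j assume j: "j \<in> J"
      have "ennreal (1 / c j) * ennreal (c j) = ennreal (1 / c j * c j)"
        by (rule ennreal_mult[symmetric]) (use cpos[OF j] in auto)
      also have "\<dots> = 1" using cpos[OF j] by simp
      finally show "ennreal (w j) * (ennreal (1 / c j) * (\<integral>\<^sup>+x. F j x \<partial>M)) = ennreal (w j)"
        using cI[OF j] by simp
    qed
    also have "\<dots> = C" using w by (subst sum_ennreal) (auto simp: less_imp_le)
    finally show ?thesis unfolding C_def .
  qed
qed



lemma restrict_upd_same:
  assumes "z \<in> space (PiM S M)" "i \<notin> S"
  shows "restrict (z(i:=y)) S = z"
  using assms by (auto simp: space_PiM PiE_def extensional_def restrict_def fun_eq_iff)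

lemma restrict_upd_minus:
  assumes "z \<in> space (PiM S M)" "i \<notin> S" "j \<in> S"
  shows "restrict (z(i:=y)) (insert i S - {j}) = (restrict z (S - {j}))(i:=y)"
  using assms by (auto simp: restrict_def fun_eq_iff)

lemma restrict_in_space:
  "z \<in> space (PiM S M) \<Longrightarrow> restrict z T \<in> space (PiM T M)" if "T \<subseteq> S"
  using that by (auto simp: space_PiM PiE_def Pi_def)

context
  fixes N :: "'a measure"
  assumes sf: "sigma_finite_measure N"
begin

interpretation P: product_sigma_finite "\<lambda>_::nat. N"
  by (simp add: product_sigma_finite_def sf)

lemma meas_restr:
  assumes "T \<subseteq> S" "f \<in> borel_measurable (PiM T (\<lambda>_::nat. N))"
  shows "(\<lambda>x. f (restrict x T)) \<in> borel_measurable (PiM S (\<lambda>_. N))"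
  by (rule measurable_compose[OF measurable_restrict_subset[OF assms(1)] assms(2)])

lemma meas_upd:
  assumes "i \<notin> S" "w \<in> space (PiM S (\<lambda>_::nat. N))" "f \<in> borel_measurable (PiM (insert i S) (\<lambda>_. N))"
  shows "(\<lambda>y. f (w(i:=y))) \<in> borel_measurable N"
  using measurable_compose[OF measurable_component_update[OF assms(2,1)] assms(3)] by simp

lemma meas_int_upd:
  assumes "f \<in> borel_measurable (PiM (insert i S) (\<lambda>_::nat. N))"
  shows "(\<lambda>w. \<integral>\<^sup>+y. f (w(i:=y)) \<partial>N) \<in> borel_measurable (PiM S (\<lambda>_. N))"
proof -
  have "(\<lambda>(w, y). f (w(i:=y))) \<in> borel_measurable (PiM S (\<lambda>_. N) \<Otimes>\<^sub>M N)"
    using measurable_compose[OF measurable_add_dim[of i S "\<lambda>_. N"] assms] by (simp add: case_prod_beta')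
  then show ?thesis
    by (intro sigma_finite_measure.borel_measurable_nn_integral[OF sf]) (simp add: case_prod_beta')
qed

lemma int_insert:
  assumes "finite S" "i \<notin> S" "f \<in> borel_measurable (PiM (insert i S) (\<lambda>_::nat. N))"
  shows "(\<integral>\<^sup>+x. f x \<partial>PiM (insert i S) (\<lambda>_. N)) = (\<integral>\<^sup>+z. (\<integral>\<^sup>+y. f (z(i:=y)) \<partial>N) \<partial>PiM S (\<lambda>_. N))"
  using P.product_nn_integral_insert[OF assms] by simp


lemma LW:
  assumes "finite I" "card I \<ge> 2" "\<And>j. j \<in> I \<Longrightarrow> F j \<in> borel_measurable (PiM (I - {j}) (\<lambda>_::nat. N))"
  shows "(\<integral>\<^sup>+x. (\<Prod>j\<in>I. epow (F j (restrict x (I - {j}))) (1 / real (card I - 1))) \<partial>PiM I (\<lambda>_. N))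
    \<le> (\<Prod>j\<in>I. epow (\<integral>\<^sup>+y. F j y \<partial>PiM (I - {j}) (\<lambda>_. N)) (1 / real (card I - 1)))"
  using assms
proof (induction I arbitrary: F rule: finite_induct)
  case empty
  then show ?case by simp
next
  case (insert i I F)
  note iI = insert(2) and finI = insert(1)
  define k where "k = card I"
  have cI': "card (insert i I) - 1 = k" using iI finI by (simp add: k_def)
  have k1: "k \<ge> 1" using insert(4) iI finI by (simp add: k_def)
  define e where "e = 1 / real k"
  have ii: "insert i I - {i} = I" using iI by auto
  have ij: "\<And>j. j \<in> I \<Longrightarrow> insert i I - {j} = insert i (I - {j})" using iI by auto
  have Fi: "F i \<in> borel_measurable (PiM I (\<lambda>_. N))" using insert(5)[of i] ii by simp
  have Fj: "\<And>j. j \<in> I \<Longrightarrow> F j \<in> borel_measurable (PiM (insert i (I - {j})) (\<lambda>_. N))"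
    using insert(5) ij by (metis insertCI)
  have mI: "(\<lambda>x. \<Prod>j\<in>insert i I. epow (F j (restrict x (insert i I - {j}))) e) \<in> borel_measurable (PiM (insert i I) (\<lambda>_. N))"
    by (intro borel_measurable_prod_ennreal measurable_epow meas_restr insert(5)) auto
  have "(\<integral>\<^sup>+x. (\<Prod>j\<in>insert i I. epow (F j (restrict x (insert i I - {j}))) e) \<partial>PiM (insert i I) (\<lambda>_. N))
     = (\<integral>\<^sup>+z. (\<integral>\<^sup>+y. (\<Prod>j\<in>insert i I. epow (F j (restrict (z(i:=y)) (insert i I - {j}))) e) \<partial>N) \<partial>PiM I (\<lambda>_. N))"
    by (rule int_insert[OF finI iI mI])
  also have "\<dots> = (\<integral>\<^sup>+z. epow (F i z) e * (\<integral>\<^sup>+y. (\<Prod>j\<in>I. epow (F j ((restrict z (I - {j}))(i:=y))) e) \<partial>N) \<partial>PiM I (\<lambda>_. N))"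
  proof (rule nn_integral_cong)
    fix z assume z: "z \<in> space (PiM I (\<lambda>_::nat. N))"
    have "(\<integral>\<^sup>+y. (\<Prod>j\<in>insert i I. epow (F j (restrict (z(i:=y)) (insert i I - {j}))) e) \<partial>N)
       = (\<integral>\<^sup>+y. epow (F i z) e * (\<Prod>j\<in>I. epow (F j ((restrict z (I - {j}))(i:=y))) e) \<partial>N)"
    proof (rule nn_integral_cong)
      fix y
      show "(\<Prod>j\<in>insert i I. epow (F j (restrict (z(i:=y)) (insert i I - {j}))) e)
          = epow (F i z) e * (\<Prod>j\<in>I. epow (F j ((restrict z (I - {j}))(i:=y))) e)"
      proof -
        have a: "restrict (z(i:=y)) (insert i I - {i}) = z"
          unfolding ii by (rule restrict_upd_same[OF z iI])
        have b: "(\<Prod>j\<in>I. epow (F j (restrict (z(i:=y)) (insert i I - {j}))) e)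
            = (\<Prod>j\<in>I. epow (F j ((restrict z (I - {j}))(i:=y))) e)"
          by (intro prod.cong refl) (simp add: restrict_upd_minus[OF z iI])
        show ?thesis by (subst prod.insert[OF finI iI]) (simp only: a b)
      qed
    qed
    also have "\<dots> = epow (F i z) e * (\<integral>\<^sup>+y. (\<Prod>j\<in>I. epow (F j ((restrict z (I - {j}))(i:=y))) e) \<partial>N)"
      by (intro nn_integral_cmult borel_measurable_prod_ennreal measurable_epow meas_upd[OF _ _ Fj])
         (use iI in \<open>auto intro: restrict_in_space[OF _ z]\<close>)
    finally show "(\<integral>\<^sup>+y. (\<Prod>j\<in>insert i I. epow (F j (restrict (z(i:=y)) (insert i I - {j}))) e) \<partial>N)
       = epow (F i z) e * (\<integral>\<^sup>+y. (\<Prod>j\<in>I. epow (F j ((restrict z (I - {j}))(i:=y))) e) \<partial>N)" .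
  qed
  finally have L1: "(\<integral>\<^sup>+x. (\<Prod>j\<in>insert i I. epow (F j (restrict x (insert i I - {j}))) e) \<partial>PiM (insert i I) (\<lambda>_. N))
     = (\<integral>\<^sup>+z. epow (F i z) e * (\<integral>\<^sup>+y. (\<Prod>j\<in>I. epow (F j ((restrict z (I - {j}))(i:=y))) e) \<partial>N) \<partial>PiM I (\<lambda>_. N))" .
  have ee: "1 / real (card (insert i I) - 1) = e" using cI' by (simp add: e_def)
  have RHS: "(\<Prod>j\<in>insert i I. epow (\<integral>\<^sup>+y. F j y \<partial>PiM (insert i I - {j}) (\<lambda>_. N)) e)
     = epow (\<integral>\<^sup>+y. F i y \<partial>PiM I (\<lambda>_. N)) e * (\<Prod>j\<in>I. epow (\<integral>\<^sup>+y. F j y \<partial>PiM (insert i (I - {j})) (\<lambda>_. N)) e)"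
    by (subst prod.insert[OF finI iI]) (simp add: ii ij)
  have L2: "(\<integral>\<^sup>+z. epow (F i z) e * (\<integral>\<^sup>+y. (\<Prod>j\<in>I. epow (F j ((restrict z (I - {j}))(i:=y))) e) \<partial>N) \<partial>PiM I (\<lambda>_. N))
     \<le> epow (\<integral>\<^sup>+y. F i y \<partial>PiM I (\<lambda>_. N)) e * (\<Prod>j\<in>I. epow (\<integral>\<^sup>+y. F j y \<partial>PiM (insert i (I - {j})) (\<lambda>_. N)) e)"
  proof (cases "k = 1")
    case True
    then obtain a where a: "I = {a}" using k_def by (metis card_1_singletonE)
    have e1: "e = 1" using True by (simp add: e_def)
    have Fa: "F a \<in> borel_measurable (PiM (insert i {}) (\<lambda>_. N))" using Fj[of a] a by simp
    define c where "c = (\<integral>\<^sup>+y. F a ((\<lambda>_. undefined)(i:=y)) \<partial>N)"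
    have c: "(\<integral>\<^sup>+y. F a y \<partial>PiM (insert i {}) (\<lambda>_. N)) = c"
      using int_insert[OF _ _ Fa] P.nn_integral_empty by (simp add: c_def)
    have "(\<integral>\<^sup>+z. epow (F i z) e * (\<integral>\<^sup>+y. (\<Prod>j\<in>I. epow (F j ((restrict z (I - {j}))(i:=y))) e) \<partial>N) \<partial>PiM I (\<lambda>_. N))
       = (\<integral>\<^sup>+z. F i z * c \<partial>PiM I (\<lambda>_. N))"
      by (intro nn_integral_cong) (simp add: a e1 c_def restrict_def)
    also have "\<dots> = (\<integral>\<^sup>+y. F i y \<partial>PiM I (\<lambda>_. N)) * c"
      by (rule nn_integral_multc[OF Fi])
    also have "\<dots> = epow (\<integral>\<^sup>+y. F i y \<partial>PiM I (\<lambda>_. N)) e * (\<Prod>j\<in>I. epow (\<integral>\<^sup>+y. F j y \<partial>PiM (insert i (I - {j})) (\<lambda>_. N)) e)"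
      using c by (simp add: a e1)
    finally show ?thesis by simp
  next
    case False
    then have k2: "k \<ge> 2" using k1 by simp
    define G where "G j w = (\<integral>\<^sup>+y. F j (w(i:=y)) \<partial>N)" for j w
    have Gm: "\<And>j. j \<in> I \<Longrightarrow> G j \<in> borel_measurable (PiM (I - {j}) (\<lambda>_. N))"
      unfolding G_def by (rule meas_int_upd[OF Fj])
    define v where "v = real (k - 1) / real k"
    have v_pos: "v > 0" and e_pos: "e > 0" using k2 by (auto simp: v_def e_def)
    define Q where "Q z = (\<Prod>j\<in>I. epow (G j (restrict z (I - {j}))) (1 / real (k - 1)))" for z
    have Qm: "Q \<in> borel_measurable (PiM I (\<lambda>_. N))"
      unfolding Q_def by (intro borel_measurable_prod_ennreal measurable_epow meas_restr Gm) auto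
    have R_le: "(\<integral>\<^sup>+y. (\<Prod>j\<in>I. epow (F j ((restrict z (I - {j}))(i:=y))) e) \<partial>N) \<le> epow (Q z) v"
      if z: "z \<in> space (PiM I (\<lambda>_. N))" for z
    proof -
      have "(\<integral>\<^sup>+y. (\<Prod>j\<in>I. epow (F j ((restrict z (I - {j}))(i:=y))) e) \<partial>N)
          \<le> (\<Prod>j\<in>I. epow (\<integral>\<^sup>+y. F j ((restrict z (I - {j}))(i:=y)) \<partial>N) e)"
      proof (rule holder_nn)
        show "finite I" by fact
        show "I \<noteq> {}" using k1 k_def by auto
        show "\<And>j. j \<in> I \<Longrightarrow> 0 < e" using e_pos by simp
        show "(\<Sum>j\<in>I. e) = 1" using k1 by (simp add: e_def k_def[symmetric])
        show "\<And>j. j \<in> I \<Longrightarrow> (\<lambda>y. F j ((restrict z (I - {j}))(i:=y))) \<in> borel_measurable N"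
          by (rule meas_upd[OF _ _ Fj]) (use iI in \<open>auto intro: restrict_in_space[OF _ z]\<close>)
      qed
      also have "\<dots> = epow (Q z) v"
        unfolding Q_def using finI k2
        by (simp add: epow_prod epow_epow G_def v_def e_def)
      finally show ?thesis .
    qed
    have "(\<integral>\<^sup>+z. epow (F i z) e * (\<integral>\<^sup>+y. (\<Prod>j\<in>I. epow (F j ((restrict z (I - {j}))(i:=y))) e) \<partial>N) \<partial>PiM I (\<lambda>_. N))
       \<le> (\<integral>\<^sup>+z. (\<Prod>j\<in>{0::nat,1}. epow ((if j = 0 then F i else Q) z) (if j = 0 then e else v)) \<partial>PiM I (\<lambda>_. N))"
      by (intro nn_integral_mono) (simp add: R_le mult_left_mono)
    also have "\<dots> \<le> (\<Prod>j\<in>{0::nat,1}. epow (\<integral>\<^sup>+z. (if j = 0 then F i else Q) z \<partial>PiM I (\<lambda>_. N)) (if j = 0 then e else v))"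
    proof (rule holder_nn)
      show "(\<Sum>j\<in>{0::nat,1}. if j = 0 then e else v) = 1"
        using k2 by (simp add: e_def v_def field_simps of_nat_diff)
    qed (use e_pos v_pos Fi Qm in auto)
    also have "\<dots> = epow (\<integral>\<^sup>+z. F i z \<partial>PiM I (\<lambda>_. N)) e * epow (\<integral>\<^sup>+z. Q z \<partial>PiM I (\<lambda>_. N)) v"
      by simp
    also have "epow (\<integral>\<^sup>+z. Q z \<partial>PiM I (\<lambda>_. N)) v \<le> (\<Prod>j\<in>I. epow (\<integral>\<^sup>+y. F j y \<partial>PiM (insert i (I - {j})) (\<lambda>_. N)) e)"
    proof -
      have IH: "(\<integral>\<^sup>+z. Q z \<partial>PiM I (\<lambda>_. N)) \<le> (\<Prod>j\<in>I. epow (\<integral>\<^sup>+y. G j y \<partial>PiM (I - {j}) (\<lambda>_. N)) (1 / real (k - 1)))"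
        unfolding Q_def k_def by (rule insert.IH) (use k2 Gm in \<open>auto simp: k_def\<close>)
      have GF: "\<And>j. j \<in> I \<Longrightarrow> (\<integral>\<^sup>+y. G j y \<partial>PiM (I - {j}) (\<lambda>_. N)) = (\<integral>\<^sup>+y. F j y \<partial>PiM (insert i (I - {j})) (\<lambda>_. N))"
        unfolding G_def by (rule int_insert[symmetric]) (use finI iI Fj in auto)
      have "epow (\<integral>\<^sup>+z. Q z \<partial>PiM I (\<lambda>_. N)) v \<le> epow (\<Prod>j\<in>I. epow (\<integral>\<^sup>+y. F j y \<partial>PiM (insert i (I - {j})) (\<lambda>_. N)) (1 / real (k - 1))) v"
        using IH GF v_pos by (intro epow_mono) (auto cong: prod.cong)
      also have "\<dots> = (\<Prod>j\<in>I. epow (\<integral>\<^sup>+y. F j y \<partial>PiM (insert i (I - {j})) (\<lambda>_. N)) e)"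
        using finI k2 by (simp add: epow_prod epow_epow v_def e_def)
      finally show ?thesis .
    qed
    finally show ?thesis by (simp add: mult_left_mono)
  qed
  show ?case unfolding ee L1 RHS by (rule L2)
qed
end



definition Eb :: "nat set \<Rightarrow> ('a::real_normed_vector) set \<Rightarrow> (nat \<Rightarrow> 'a) set" where
  "Eb S K = {x \<in> PiE S (\<lambda>_. UNIV). \<exists>y\<in>K. \<forall>i\<in>S. y - x i \<in> K}"

lemma transl_mem: "y \<in> (\<lambda>y. y + c) ` K \<longleftrightarrow> y - c \<in> (K :: 'a::ab_group_add set)"
proof
  assume "y \<in> (\<lambda>y. y + c) ` K" then show "y - c \<in> K" by auto
next
  assume "y - c \<in> K" then have "(y - c) + c \<in> (\<lambda>y. y + c) ` K" by blast
  then show "y \<in> (\<lambda>y. y + c) ` K" by simp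
qed

lemma dense_countable:
  obtains D :: "'a::second_countable_topology set"
  where "countable D" "\<And>X. open X \<Longrightarrow> X \<noteq> {} \<Longrightarrow> \<exists>d\<in>D. d \<in> X"
proof -
  obtain B :: "'a set set" where B: "countable B" "\<And>S. open S \<Longrightarrow> \<exists>U. U \<subseteq> B \<and> S = \<Union>U"
    using univ_second_countable by metis
  define D where "D = (\<lambda>b. SOME x. x \<in> b) ` B"
  have "countable D" using B(1) by (simp add: D_def)
  moreover have "\<exists>d\<in>D. d \<in> X" if X: "open X" "X \<noteq> {}" for X
  proof -
    obtain U where U: "U \<subseteq> B" "X = \<Union>U" using B(2)[OF X(1)] by blast
    then obtain b x where b: "b \<in> U" "x \<in> b" using X(2) by blast
    then have "(SOME x. x \<in> b) \<in> b" by (metis someI)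
    then show ?thesis using b U by (auto simp: D_def)
  qed
  ultimately show ?thesis using that by blast
qed

lemma Eb_bound:
  fixes K :: "'a::euclidean_space set"
  assumes "compact K" "K \<noteq> {}"
  shows "\<exists>R. \<forall>v. infdist v K \<le> 1 \<longrightarrow> norm v \<le> R"
proof -
  obtain B where B: "\<And>k. k \<in> K \<Longrightarrow> norm k \<le> B"
    using compact_imp_bounded[OF assms(1)] by (auto simp: bounded_iff)
  have "norm v \<le> B + 1" if "infdist v K \<le> 1" for v
  proof -
    have "norm v - B \<le> infdist v K"
      unfolding infdist_notempty[OF assms(2)]
    proof (rule cINF_greatest[OF assms(2)])
      fix k assume "k \<in> K"
      then show "norm v - B \<le> dist v k" using B[of k] norm_triangle_ineq2[of v k]
        by (simp add: dist_norm)
    qed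
    then show ?thesis using that by simp
  qed
  then show ?thesis by blast
qed

lemma Eb_char:
  fixes K :: "'a::euclidean_space set"
  assumes K: "compact K" "K \<noteq> {}" and D: "\<And>X. open X \<Longrightarrow> X \<noteq> {} \<Longrightarrow> \<exists>d\<in>D. d \<in> X"
  shows "Eb S K = {x \<in> PiE S (\<lambda>_. UNIV). \<forall>n::nat. \<exists>q\<in>D. infdist q K \<le> inverse (real (Suc n))
      \<and> (\<forall>i\<in>S. infdist (q - x i) K \<le> inverse (real (Suc n)))}"
proof (intro set_eqI iffI)
  fix x assume "x \<in> Eb S K"
  then obtain y where x: "x \<in> PiE S (\<lambda>_. UNIV)" and y: "y \<in> K" "\<And>i. i \<in> S \<Longrightarrow> y - x i \<in> K"
    by (auto simp: Eb_def)
  show "x \<in> {x \<in> PiE S (\<lambda>_. UNIV). \<forall>n::nat. \<exists>q\<in>D. infdist q K \<le> inverse (real (Suc n))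
      \<and> (\<forall>i\<in>S. infdist (q - x i) K \<le> inverse (real (Suc n)))}"
  proof (intro CollectI conjI allI x)
    fix n :: nat
    obtain q where q: "q \<in> D" "q \<in> ball y (inverse (real (Suc n)))"
      using D[of "ball y (inverse (real (Suc n)))"] by auto
    have dq: "dist q y \<le> inverse (real (Suc n))" using q(2) by (simp add: dist_commute)
    have "infdist q K \<le> inverse (real (Suc n))" using infdist_le2[OF y(1) dq] .
    moreover have "infdist (q - x i) K \<le> inverse (real (Suc n))" if "i \<in> S" for i
      by (rule infdist_le2[OF y(2)[OF that]]) (use dq in \<open>simp add: dist_norm\<close>)
    ultimately show "\<exists>q\<in>D. infdist q K \<le> inverse (real (Suc n))
      \<and> (\<forall>i\<in>S. infdist (q - x i) K \<le> inverse (real (Suc n)))" using q(1) by blast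
  qed
next
  fix x assume "x \<in> {x \<in> PiE S (\<lambda>_. UNIV). \<forall>n::nat. \<exists>q\<in>D. infdist q K \<le> inverse (real (Suc n))
      \<and> (\<forall>i\<in>S. infdist (q - x i) K \<le> inverse (real (Suc n)))}"
  then have x: "x \<in> PiE S (\<lambda>_. UNIV)" and ex: "\<forall>n::nat. \<exists>q. infdist q K \<le> inverse (real (Suc n))
      \<and> (\<forall>i\<in>S. infdist (q - x i) K \<le> inverse (real (Suc n)))" by auto
  then obtain q where q: "\<And>n. infdist (q n) K \<le> inverse (real (Suc n))"
      "\<And>n i. i \<in> S \<Longrightarrow> infdist (q n - x i) K \<le> inverse (real (Suc n))"
    by metis
  obtain R where R: "\<And>v. infdist v K \<le> 1 \<Longrightarrow> norm v \<le> R" using Eb_bound[OF K] by blast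
  have qT: "\<forall>n. q n \<in> cball 0 R"
  proof
    fix n
    have "inverse (real (Suc n)) \<le> 1" by (simp add: inverse_le_1_iff)
    then show "q n \<in> cball 0 R" using R[of "q n"] q(1)[of n] by simp
  qed
  obtain l r where lr: "strict_mono (r :: nat \<Rightarrow> nat)" "(q \<circ> r) \<longlonglongrightarrow> l"
    using seq_compactE[OF compact_imp_seq_compact[OF compact_cball] qT] by metis
  have bnd: "\<And>n. inverse (real (Suc (r n))) \<le> inverse (real (Suc n))"
    using seq_suble[OF lr(1)] by (simp add: le_imp_inverse_le)
  have lim0: "(\<lambda>n. inverse (real (Suc n))) \<longlonglongrightarrow> 0" by (rule LIMSEQ_inverse_real_of_nat)
  have closedK: "closed K" using K(1) by (rule compact_imp_closed)
  have "infdist l K \<le> 0"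
  proof (rule LIMSEQ_le[OF tendsto_infdist[OF lr(2)] lim0])
    show "\<exists>N. \<forall>n\<ge>N. infdist ((q \<circ> r) n) K \<le> inverse (real (Suc n))"
    proof (intro exI allI impI)
      fix n :: nat show "infdist ((q \<circ> r) n) K \<le> inverse (real (Suc n))"
        using order_trans[OF q(1)[of "r n"] bnd[of n]] by simp
    qed
  qed
  then have lK: "l \<in> K" using in_closed_iff_infdist_zero[OF closedK K(2)] infdist_nonneg[of l K] by simp
  have "l - x i \<in> K" if i: "i \<in> S" for i
  proof -
    have "infdist (l - x i) K \<le> 0"
    proof (rule LIMSEQ_le[OF tendsto_infdist[OF tendsto_diff[OF lr(2) tendsto_const]] lim0])
      show "\<exists>N. \<forall>n\<ge>N. infdist ((q \<circ> r) n - x i) K \<le> inverse (real (Suc n))"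
      proof (intro exI allI impI)
        fix n :: nat show "infdist ((q \<circ> r) n - x i) K \<le> inverse (real (Suc n))"
          using order_trans[OF q(2)[OF i, of "r n"] bnd[of n]] by simp
      qed
    qed
    then show ?thesis using in_closed_iff_infdist_zero[OF closedK K(2)] infdist_nonneg[of "l - x i" K] by simp
  qed
  then show "x \<in> Eb S K" using x lK by (auto simp: Eb_def)
qed

lemma Eb_sets:
  fixes K :: "'a::euclidean_space set"
  assumes S: "finite S" and K: "compact K" "K \<noteq> {}"
  shows "Eb S K \<in> sets (PiM S (\<lambda>_. lborel))"
proof -
  obtain D :: "'a set" where D: "countable D" "\<And>X. open X \<Longrightarrow> X \<noteq> {} \<Longrightarrow> \<exists>d\<in>D. d \<in> X"
    using dense_countable by blast
  have sp: "space (PiM S (\<lambda>_. lborel :: 'a measure)) = PiE S (\<lambda>_. UNIV)" by (simp add: space_PiM)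
  have one: "{x \<in> space (PiM S (\<lambda>_. lborel)). infdist (q - x i) K \<le> c} \<in> sets (PiM S (\<lambda>_. lborel :: 'a measure))"
    if i: "i \<in> S" for q i c
  proof -
    have cl: "closed {v. infdist (q - v) K \<le> c}"
      by (intro closed_Collect_le continuous_intros)
    then have "{v. infdist (q - v) K \<le> c} \<in> sets (lborel :: 'a measure)" by simp
    then have "{x \<in> space (PiM S (\<lambda>_. lborel)). x i \<in> {v. infdist (q - v) K \<le> c}} \<in> sets (PiM S (\<lambda>_. lborel :: 'a measure))"
      by (rule sets_Collect_single[OF i])
    then show ?thesis by simp
  qed
  have "{x \<in> space (PiM S (\<lambda>_. lborel :: 'a measure)). \<forall>n::nat. \<exists>q\<in>D. infdist q K \<le> inverse (real (Suc n))
      \<and> (\<forall>i\<in>S. infdist (q - x i) K \<le> inverse (real (Suc n)))} \<in> sets (PiM S (\<lambda>_. lborel))"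
    by (intro sets.sets_Collect_countable_All sets.sets_Collect_countable_Ex' sets.sets_Collect_conj
        sets.sets_Collect_const sets.sets_Collect_countable_All' one countable_finite S D(1))
  then show ?thesis using Eb_char[OF K D(2)] sp by simp
qed

lemma diff_body_Eb: "diff_body m K = Eb {..<m} K"
  unfolding diff_body_def Eb_def
  by (auto simp: transl_mem) blast+



interpretation PL: product_sigma_finite "\<lambda>_::nat. lborel :: 'a::euclidean_space measure"
  by (simp add: product_sigma_finite_def lborel.sigma_finite_measure_axioms)

lemma Eb_reindex:
  fixes K :: "'a::euclidean_space set"
  assumes S: "finite S" and T: "finite T" and c: "card T = card S" and K: "compact K" "K \<noteq> {}"
  shows "emeasure (PiM S (\<lambda>_. lborel)) (Eb S K) = emeasure (PiM T (\<lambda>_. lborel :: 'a measure)) (Eb T K)"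
proof -
  obtain f where f: "bij_betw f T S" using finite_same_card_bij[OF T S c] by blast
  have fS: "\<And>j. j \<in> T \<Longrightarrow> f j \<in> S" using f by (auto simp: bij_betw_def)
  define t where "t x = (\<lambda>j\<in>T. x (f j))" for x :: "nat \<Rightarrow> 'a"
  have tm: "t \<in> measurable (PiM S (\<lambda>_. lborel)) (PiM T (\<lambda>_. lborel :: 'a measure))"
    unfolding t_def by (intro measurable_restrict measurable_component_singleton fS)
  have distr: "distr (PiM S (\<lambda>_. lborel)) (PiM T (\<lambda>_. lborel)) t = PiM T (\<lambda>_. lborel :: 'a measure)"
  proof (rule PL.PiM_eqI[OF T])
    show "sets (distr (PiM S (\<lambda>_. lborel)) (PiM T (\<lambda>_. lborel)) t) = sets (PiM T (\<lambda>_. lborel :: 'a measure))"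
      by simp
  next
    fix A assume A: "\<And>i. i \<in> T \<Longrightarrow> A i \<in> sets (lborel :: 'a measure)"
    define g where "g i = the_inv_into T f i" for i
    have g: "\<And>i. i \<in> S \<Longrightarrow> g i \<in> T" "\<And>i. i \<in> S \<Longrightarrow> f (g i) = i" "\<And>j. j \<in> T \<Longrightarrow> g (f j) = j"
      using f by (auto simp: g_def bij_betw_def the_inv_into_into f_the_inv_into_f the_inv_into_f_f)
    have pre: "t -` PiE T A \<inter> space (PiM S (\<lambda>_. lborel)) = PiE S (\<lambda>i. A (g i))"
    proof (intro set_eqI iffI)
      fix x assume "x \<in> t -` PiE T A \<inter> space (PiM S (\<lambda>_. lborel))"
      then show "x \<in> PiE S (\<lambda>i. A (g i))"
        using g by (force simp: t_def space_PiM PiE_iff)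
    next
      fix x assume "x \<in> PiE S (\<lambda>i. A (g i))"
      then show "x \<in> t -` PiE T A \<inter> space (PiM S (\<lambda>_. lborel))"
        using g fS by (force simp: t_def space_PiM PiE_iff)
    qed
    have "emeasure (distr (PiM S (\<lambda>_. lborel)) (PiM T (\<lambda>_. lborel)) t) (PiE T A)
        = emeasure (PiM S (\<lambda>_. lborel)) (PiE S (\<lambda>i. A (g i)))"
      using A by (subst emeasure_distr[OF tm]) (auto simp: pre intro!: sets_PiM_I_finite T)
    also have "\<dots> = (\<Prod>i\<in>S. emeasure lborel (A (g i)))"
      using A g by (intro PL.emeasure_PiM S) auto
    also have "\<dots> = (\<Prod>j\<in>T. emeasure lborel (A j))"
      using g by (subst prod.reindex_bij_betw[OF f, symmetric]) (auto intro!: prod.cong)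
    finally show "emeasure (distr (PiM S (\<lambda>_. lborel)) (PiM T (\<lambda>_. lborel)) t) (PiE T A) = (\<Prod>j\<in>T. emeasure lborel (A j))" .
  qed
  have pre: "t -` Eb T K \<inter> space (PiM S (\<lambda>_. lborel)) = Eb S K"
  proof (intro set_eqI iffI)
    fix x assume "x \<in> t -` Eb T K \<inter> space (PiM S (\<lambda>_. lborel))"
    then have x: "x \<in> PiE S (\<lambda>_. UNIV)" and "\<exists>y\<in>K. \<forall>j\<in>T. y - x (f j) \<in> K"
      by (auto simp: Eb_def t_def space_PiM)
    then obtain y where y: "y \<in> K" "\<And>j. j \<in> T \<Longrightarrow> y - x (f j) \<in> K" by blast
    have "\<forall>i\<in>S. y - x i \<in> K"
    proof
      fix i assume "i \<in> S"
      then obtain j where "j \<in> T" "i = f j" using f by (auto simp: bij_betw_def)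
      then show "y - x i \<in> K" using y by simp
    qed
    then show "x \<in> Eb S K" using x y by (auto simp: Eb_def)
  next
    fix x assume "x \<in> Eb S K"
    then show "x \<in> t -` Eb T K \<inter> space (PiM S (\<lambda>_. lborel))"
      using fS by (auto simp: Eb_def t_def space_PiM)
  qed
  have "emeasure (PiM T (\<lambda>_. lborel :: 'a measure)) (Eb T K) = emeasure (distr (PiM S (\<lambda>_. lborel)) (PiM T (\<lambda>_. lborel)) t) (Eb T K)"
    by (simp add: distr)
  also have "\<dots> = emeasure (PiM S (\<lambda>_. lborel)) (Eb S K)"
    by (subst emeasure_distr[OF tm Eb_sets[OF T K]]) (simp add: pre)
  finally show ?thesis by simp
qed

lemma Eb_finite:
  fixes K :: "'a::euclidean_space set"
  assumes S: "finite S" and K: "compact K"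
  shows "emeasure (PiM S (\<lambda>_. lborel :: 'a measure)) (Eb S K) < top"
proof -
  obtain B where B: "\<And>k. k \<in> K \<Longrightarrow> norm k \<le> B"
    using compact_imp_bounded[OF K] by (auto simp: bounded_iff)
  have sub: "Eb S K \<subseteq> PiE S (\<lambda>_. cball 0 (2 * B))"
  proof
    fix x assume "x \<in> Eb S K"
    then obtain y where x: "x \<in> PiE S (\<lambda>_. UNIV)" "y \<in> K" "\<And>i. i \<in> S \<Longrightarrow> y - x i \<in> K"
      by (auto simp: Eb_def)
    have "norm (x i) \<le> 2 * B" if "i \<in> S" for i
    proof -
      have "x i = y - (y - x i)" by simp
      then have "norm (x i) \<le> norm y + norm (y - x i)" by (metis norm_triangle_ineq4)
      then show ?thesis using B[OF x(2)] B[OF x(3)[OF that]] by simp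
    qed
    then show "x \<in> PiE S (\<lambda>_. cball 0 (2 * B))" using x(1) by (auto simp: PiE_iff)
  qed
  have "emeasure (PiM S (\<lambda>_. lborel :: 'a measure)) (Eb S K) \<le> emeasure (PiM S (\<lambda>_. lborel :: 'a measure)) (PiE S (\<lambda>_. cball 0 (2 * B)))"
    by (intro emeasure_mono sub sets_PiM_I_finite S) auto
  also have "\<dots> = (\<Prod>i\<in>S. emeasure lborel (cball (0::'a) (2 * B)))"
    by (intro PL.emeasure_PiM S) auto
  also have "\<dots> < top"
    using emeasure_bounded_finite[of "cball (0::'a) (2 * B)"] by (simp add: power_less_top_ennreal)
  finally show ?thesis .
qed

lemma main_ineq:
  fixes K :: "'a::euclidean_space set"
  assumes m: "m \<ge> 1" and K: "compact K" "K \<noteq> {}"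
  shows "emeasure (PiM {..<Suc m} (\<lambda>_. lborel :: 'a measure)) (Eb {..<Suc m} K)
    \<le> (epow (emeasure (PiM {..<m} (\<lambda>_. lborel :: 'a measure)) (Eb {..<m} K)) (1 / real m)) ^ Suc m"
proof -
  define I where "I = {..<Suc m}"
  define e where "e = emeasure (PiM {..<m} (\<lambda>_. lborel :: 'a measure)) (Eb {..<m} K)"
  have cI: "card I = Suc m" by (simp add: I_def)
  have finI: "finite I" by (simp add: I_def)
  define F where "F j = (indicator (Eb (I - {j}) K) :: (nat \<Rightarrow> 'a) \<Rightarrow> ennreal)" for j
  have Fm: "\<And>j. j \<in> I \<Longrightarrow> F j \<in> borel_measurable (PiM (I - {j}) (\<lambda>_. lborel :: 'a measure))"
    unfolding F_def using finI K by (intro borel_measurable_indicator Eb_sets) auto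
  have LW': "(\<integral>\<^sup>+x. (\<Prod>j\<in>I. epow (F j (restrict x (I - {j}))) (1 / real (card I - 1))) \<partial>PiM I (\<lambda>_. lborel))
    \<le> (\<Prod>j\<in>I. epow (\<integral>\<^sup>+y. F j y \<partial>PiM (I - {j}) (\<lambda>_. lborel :: 'a measure)) (1 / real (card I - 1)))"
    by (rule LW[OF lborel.sigma_finite_measure_axioms finI _ Fm]) (use cI m in auto)
  have int: "(\<integral>\<^sup>+y. F j y \<partial>PiM (I - {j}) (\<lambda>_. lborel :: 'a measure)) = e" if j: "j \<in> I" for j
  proof -
    have "(\<integral>\<^sup>+y. F j y \<partial>PiM (I - {j}) (\<lambda>_. lborel :: 'a measure)) = emeasure (PiM (I - {j}) (\<lambda>_. lborel :: 'a measure)) (Eb (I - {j}) K)"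
      unfolding F_def using finI K by (intro nn_integral_indicator Eb_sets) auto
    also have "\<dots> = e" unfolding e_def
      by (rule Eb_reindex) (use finI K j cI in auto)
    finally show ?thesis .
  qed
  have "emeasure (PiM I (\<lambda>_. lborel :: 'a measure)) (Eb I K) = (\<integral>\<^sup>+x. indicator (Eb I K) x \<partial>PiM I (\<lambda>_. lborel))"
    using finI K by (intro nn_integral_indicator[symmetric] Eb_sets) auto
  also have "\<dots> \<le> (\<integral>\<^sup>+x. (\<Prod>j\<in>I. epow (F j (restrict x (I - {j}))) (1 / real (card I - 1))) \<partial>PiM I (\<lambda>_. lborel))"
  proof (rule nn_integral_mono)
    fix x
    show "indicator (Eb I K) x \<le> (\<Prod>j\<in>I. epow (F j (restrict x (I - {j}))) (1 / real (card I - 1)))"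
    proof (cases "x \<in> Eb I K")
      case True
      then have "\<And>j. restrict x (I - {j}) \<in> Eb (I - {j}) K"
        by (auto simp: Eb_def)
      then show ?thesis using True by (simp add: F_def)
    qed simp
  qed
  also have "\<dots> \<le> (\<Prod>j\<in>I. epow e (1 / real m))"
    using LW' int cI by (simp cong: prod.cong)
  also have "\<dots> = (epow e (1 / real m)) ^ Suc m" using cI by simp
  finally show ?thesis unfolding I_def e_def .
qed



theorem corollary3p3:
  fixes K :: "(real ^ 'n) set" and m :: nat
  assumes "convex_body K"
  shows "S_ratio (m + 1) K ^ m \<le> S_ratio m K ^ (m + 1)"
proof -
  have K: "compact K" "K \<noteq> {}" using assms interior_subset[of K] by (auto simp: convex_body_def)
  show ?thesis
  proof (cases "m = 0")
    case True
    have "Eb {} K = {\<lambda>_. undefined}" using K(2) by (auto simp: Eb_def)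
    then have "S_ratio 0 K = 1"
      by (simp add: S_ratio_def diff_body_Eb measure_def)
    then show ?thesis using True by simp
  next
    case False
    then have m: "m \<ge> 1" by simp
    define a where "a = emeasure (PiM {..<Suc m} (\<lambda>_. lborel :: (real^'n) measure)) (Eb {..<Suc m} K)"
    define b where "b = emeasure (PiM {..<m} (\<lambda>_. lborel :: (real^'n) measure)) (Eb {..<m} K)"
    have at: "a < top" unfolding a_def by (rule Eb_finite) (use K in auto)
    have bt: "b < top" unfolding b_def by (rule Eb_finite) (use K in auto)
    define A where "A = enn2real a"
    define B where "B = enn2real b"
    have aA: "a = ennreal A" and bB: "b = ennreal B" and A0: "A \<ge> 0" and B0: "B \<ge> 0"
      using at bt by (auto simp: A_def B_def ennreal_enn2real_if)
    have ab: "a \<le> (epow b (1 / real m)) ^ Suc m"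
      unfolding a_def b_def by (rule main_ineq[OF m K])
    have eb: "(epow b (1 / real m)) ^ m = b"
      using m by (simp add: epow_nat[symmetric] epow_epow)
    have "a ^ m \<le> ((epow b (1 / real m)) ^ Suc m) ^ m"
      by (rule power_mono[OF ab]) simp
    also have "\<dots> = ((epow b (1 / real m)) ^ m) ^ Suc m"
      by (simp only: power_mult[symmetric] mult.commute)
    also have "\<dots> = b ^ Suc m" by (simp add: eb)
    finally have le: "a ^ m \<le> b ^ Suc m" .
    have "ennreal (A ^ m) = a ^ m" using A0 by (simp add: aA ennreal_power)
    moreover have "ennreal (B ^ Suc m) = b ^ Suc m" using B0 by (simp only: bB ennreal_power)
    ultimately have "ennreal (A ^ m) \<le> ennreal (B ^ Suc m)" using le by simp
    then have AB: "A ^ m \<le> B ^ Suc m" using B0 by (simp only: ennreal_le_iff zero_le_power)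
    define V where "V = measure lborel K"
    have V0: "V \<ge> 0" by (simp add: V_def)
    have SA: "S_ratio (m + 1) K = A / V ^ (m + 1)"
      by (simp add: S_ratio_def diff_body_Eb measure_def A_def a_def V_def)
    have SB: "S_ratio m K = B / V ^ m"
      by (simp add: S_ratio_def diff_body_Eb measure_def B_def b_def V_def)
    have "S_ratio (m + 1) K ^ m = A ^ m / V ^ ((m + 1) * m)"
      unfolding SA by (simp only: power_divide power_mult)
    also have "\<dots> \<le> B ^ (m + 1) / V ^ ((m + 1) * m)"
      using AB V0 by (intro divide_right_mono) auto
    also have "\<dots> = S_ratio m K ^ (m + 1)"
      unfolding SB by (simp only: power_divide power_mult[symmetric] mult.commute)
    finally show ?thesis .
  qed
qed

end
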